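(* Every free completely simple semigroup $S=F_{css}(X)$ of finite rank $n\ge 2$ is an equational domain in the language $\mathcal{L}_S$.
   Context: Completely simple semigroups are considered as algebras in the language $\{\cdot,{}^{-1}\}$, where they form a variety (defined by $xx^{-1}x=x$, $xx^{-1}=x^{-1}x$, $(x^{-1})^{-1}=x$, $(xyx)^{-1}(xyx)=x^{-1}x$ together with associativity); $F_{css}(X)$ is the free algebra of this variety on the set $X$, $|X|=n$. The language $\mathcal{L}_S$ is $\{\cdot,{}^{-1}\}$ plus a constant for each element of $S$. An equation is an equality of two $\mathcal{L}_S$-terms; an algebraic set is the solution set in $S^m$ of a system of equations; $S$ is an equational domain if every finite union of algebraic sets is algebraic. *)

theory Defs
  imports Main
begin

datatype 'x trm = Var 'x | Mul "'x trm" "'x trm" | Inv "'x trm"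

text \<open>Since the axioms are stated for arbitrary terms,
this is the fully invariant congruence generated by the identities.\<close>

inductive css_eq :: "'x trm \<Rightarrow> 'x trm \<Rightarrow> bool" where
  refl: "css_eq t t"
| sym: "css_eq s t \<Longrightarrow> css_eq t s"
| trans: "css_eq s t \<Longrightarrow> css_eq t u \<Longrightarrow> css_eq s u"
| cong_mul: "css_eq s s' \<Longrightarrow> css_eq t t' \<Longrightarrow> css_eq (Mul s t) (Mul s' t')"
| cong_inv: "css_eq s s' \<Longrightarrow> css_eq (Inv s) (Inv s')"
| ax_assoc: "css_eq (Mul (Mul x y) z) (Mul x (Mul y z))"
| ax_idem: "css_eq (Mul (Mul x (Inv x)) x) x"
| ax_comm: "css_eq (Mul x (Inv x)) (Mul (Inv x) x)"
| ax_invinv: "css_eq (Inv (Inv x)) x"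
| ax_cs: "css_eq (Mul (Inv (Mul (Mul x y) x)) (Mul (Mul x y) x)) (Mul (Inv x) x)"

lemma css_eq_equivp: "equivp css_eq"
  by (intro equivpI reflpI sympI transpI) (auto intro: css_eq.intros)

quotient_type 'x fcss = "'x trm" / css_eq
  by (rule css_eq_equivp)

lift_definition fcss_mul :: "'x fcss \<Rightarrow> 'x fcss \<Rightarrow> 'x fcss" is Mul
  by (rule css_eq.cong_mul)

lift_definition fcss_inv :: "'x fcss \<Rightarrow> 'x fcss" is Inv
  by (rule css_eq.cong_inv)

datatype ('c) ltrm = LVar nat | LConst 'c | LMul "'c ltrm" "'c ltrm" | LInv "'c ltrm"

fun lvars :: "'c ltrm \<Rightarrow> nat set" where
  "lvars (LVar i) = {i}"
| "lvars (LConst c) = {}"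
| "lvars (LMul s t) = lvars s \<union> lvars t"
| "lvars (LInv s) = lvars s"

fun leval :: "('a \<Rightarrow> 'a \<Rightarrow> 'a) \<Rightarrow> ('a \<Rightarrow> 'a) \<Rightarrow> 'a list \<Rightarrow> 'a ltrm \<Rightarrow> 'a" where
  "leval mul iv p (LVar i) = p ! i"
| "leval mul iv p (LConst c) = c"
| "leval mul iv p (LMul s t) = mul (leval mul iv p s) (leval mul iv p t)"
| "leval mul iv p (LInv s) = iv (leval mul iv p s)"

definition solution_set ::
  "('a \<Rightarrow> 'a \<Rightarrow> 'a) \<Rightarrow> ('a \<Rightarrow> 'a) \<Rightarrow> nat \<Rightarrow> ('a ltrm \<times> 'a ltrm) set \<Rightarrow> 'a list set" where
  "solution_set mul iv m E =
     {p. length p = m \<and> (\<forall>(s, t) \<in> E. leval mul iv p s = leval mul iv p t)}"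

definition algebraic_set ::
  "('a \<Rightarrow> 'a \<Rightarrow> 'a) \<Rightarrow> ('a \<Rightarrow> 'a) \<Rightarrow> nat \<Rightarrow> 'a list set \<Rightarrow> bool" where
  "algebraic_set mul iv m Y \<longleftrightarrow>
     (\<exists>E. (\<forall>(s, t) \<in> E. lvars s \<union> lvars t \<subseteq> {..<m}) \<and> Y = solution_set mul iv m E)"

definition equational_domain :: "('a \<Rightarrow> 'a \<Rightarrow> 'a) \<Rightarrow> ('a \<Rightarrow> 'a) \<Rightarrow> bool" where
  "equational_domain mul iv \<longleftrightarrow>
     (\<forall>m (F :: 'a list set set). finite F \<and> (\<forall>Y \<in> F. algebraic_set mul iv m Y)
        \<longrightarrow> algebraic_set mul iv m (\<Union>F))"

end

theory Submission
  imports Defs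
begin


type_synonym 'g letter = "'g \<times> bool"

fun flip :: "'g letter \<Rightarrow> 'g letter" where "flip (g, b) = (g, \<not> b)"

lemma flip_flip[simp]: "flip (flip a) = a" by (cases a) simp
lemma flip_neq[simp]: "flip a \<noteq> a" "a \<noteq> flip a" by (cases a, simp)+
lemma flip_inj[simp]: "(flip a = flip b) = (a = b)" by (cases a, cases b) auto

fun cancel1 :: "'g letter \<Rightarrow> 'g letter list \<Rightarrow> 'g letter list" where
  "cancel1 a [] = [a]"
| "cancel1 a (b # w) = (if b = flip a then w else a # b # w)"

fun red :: "'g letter list \<Rightarrow> 'g letter list" where
  "red [] = []"
| "red (a # w) = cancel1 a (red w)"

fun reduced :: "'g letter list \<Rightarrow> bool" where
  "reduced [] = True"
| "reduced [a] = True"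
| "reduced (a # b # w) = (b \<noteq> flip a \<and> reduced (b # w))"

lemma reduced_tl: "reduced (a # w) \<Longrightarrow> reduced w"
  by (cases w) auto

lemma reduced_cancel1: "reduced w \<Longrightarrow> reduced (cancel1 a w)"
  by (cases w) (auto intro: reduced_tl)

lemma reduced_red: "reduced (red w)"
  by (induction w) (auto intro: reduced_cancel1)

lemma red_reduced: "reduced w \<Longrightarrow> red w = w"
proof (induction w)
  case Nil then show ?case by simp
next
  case (Cons a w)
  then have "red w = w" using reduced_tl by blast
  then show ?case using Cons.prems by (cases w) auto
qed

lemma red_red[simp]: "red (red w) = red w"
  by (simp add: red_reduced reduced_red)

lemma red_append_red2: "red (u @ red v) = red (u @ v)"
  by (induction u) auto

lemma cancel1_cancel1: "reduced r \<Longrightarrow> cancel1 a (cancel1 (flip a) r) = r"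
  apply (cases r)
   apply simp
  subgoal for b w by (cases w) auto
  done

lemma red_cancel1_append: "red (cancel1 a w @ v) = cancel1 a (red (w @ v))"
proof (cases w)
  case Nil then show ?thesis by simp
next
  case (Cons b w')
  show ?thesis
  proof (cases "b = flip a")
    case True
    then show ?thesis using Cons cancel1_cancel1[OF reduced_red, of a "w' @ v"] by simp
  next
    case False then show ?thesis using Cons by simp
  qed
qed

lemma red_append_red1: "red (red u @ v) = red (u @ v)"
  by (induction u) (auto simp: red_cancel1_append)

definition winv :: "'g letter list \<Rightarrow> 'g letter list" where
  "winv w = rev (map flip w)"

lemma winv_Cons: "winv (a # w) = winv w @ [flip a]" by (simp add: winv_def)
lemma winv_winv[simp]: "winv (winv w) = w" by (simp add: winv_def rev_map comp_def)

lemma red_right_inv: "red (w @ winv w) = []"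
proof (induction w)
  case Nil then show ?case by (simp add: winv_def)
next
  case (Cons a w)
  have "red (a # w @ winv (a # w)) = cancel1 a (red ((w @ winv w) @ [flip a]))"
    by (simp add: winv_Cons)
  also have "red ((w @ winv w) @ [flip a]) = red (red (w @ winv w) @ [flip a])"
    by (simp only: red_append_red1)
  also have "\<dots> = [flip a]" using Cons by simp
  finally show ?case by simp
qed

lemma red_left_inv: "red (winv w @ w) = []"
  using red_right_inv[of "winv w"] by simp

typedef 'g fg = "{w :: 'g letter list. reduced w}"
  morphisms fg_rep fg_abs
  by (rule exI[of _ "[]"]) simp

lemma fg_rep_reduced: "reduced (fg_rep x)"
  using fg_rep by auto

lemma fg_rep_abs_red[simp]: "fg_rep (fg_abs (red w)) = red w"
  by (simp add: fg_abs_inverse reduced_red)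

lemma red_fg_rep[simp]: "red (fg_rep x) = fg_rep x"
  by (simp add: red_reduced fg_rep_reduced)

instantiation fg :: (type) group_add
begin
definition "0 = fg_abs []"
definition "x + y = fg_abs (red (fg_rep x @ fg_rep y))"
definition "- x = fg_abs (red (winv (fg_rep x)))"
definition "x - y = x + (- (y :: 'a fg))"
instance
proof
  fix a b c :: "'a fg"
  show "a + b + c = a + (b + c)"
    unfolding plus_fg_def
    by (simp add: red_append_red1 red_append_red2)
  show "0 + a = a" unfolding plus_fg_def zero_fg_def
    by (simp add: fg_abs_inverse fg_rep_inverse)
  show "a + 0 = a" unfolding plus_fg_def zero_fg_def
    by (simp add: fg_abs_inverse fg_rep_inverse)
  show "- a + a = 0" unfolding plus_fg_def zero_fg_def uminus_fg_def
    by (simp add: red_append_red1 red_left_inv)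
  show "a + - b = a - b" by (simp add: minus_fg_def)
qed
end

lemma fg_rep_plus: "fg_rep (x + y) = red (fg_rep x @ fg_rep y)"
  by (simp add: plus_fg_def)
lemma fg_rep_zero: "fg_rep 0 = []"
  by (simp add: zero_fg_def fg_abs_inverse)
lemma fg_rep_uminus: "fg_rep (- x) = red (winv (fg_rep x))"
  by (simp add: uminus_fg_def)




locale cs =
  fixes mul :: "'a \<Rightarrow> 'a \<Rightarrow> 'a" (infixl "\<cdot>" 70) and inv :: "'a \<Rightarrow> 'a"
  assumes assoc: "(x \<cdot> y) \<cdot> z = x \<cdot> (y \<cdot> z)"
    and idem0: "x \<cdot> inv x \<cdot> x = x"
    and comm: "x \<cdot> inv x = inv x \<cdot> x"
    and invinv[simp]: "inv (inv x) = x"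
    and csax0: "inv (x \<cdot> y \<cdot> x) \<cdot> (x \<cdot> y \<cdot> x) = inv x \<cdot> x"
begin

declare assoc[simp]

lemma idem[simp]: "x \<cdot> (inv x \<cdot> x) = x" using idem0 by simp
lemma idem_r[simp]: "x \<cdot> (inv x \<cdot> (x \<cdot> z)) = x \<cdot> z"
  using idem by (metis assoc)
lemma inv_idem[simp]: "inv x \<cdot> (x \<cdot> inv x) = inv x"
  using idem[of "inv x"] by simp
lemma inv_idem_r[simp]: "inv x \<cdot> (x \<cdot> (inv x \<cdot> z)) = inv x \<cdot> z"
  using inv_idem by (metis assoc)
lemma x_x0[simp]: "x \<cdot> (x \<cdot> inv x) = x"
  using idem[of x] comm[of x] by simp
lemma x_x0_r[simp]: "x \<cdot> (x \<cdot> (inv x \<cdot> z)) = x \<cdot> z"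
  using x_x0 by (metis assoc)
lemma ix_x0[simp]: "inv x \<cdot> (inv x \<cdot> x) = inv x"
  using x_x0[of "inv x"] by simp
lemma ix_x0_r[simp]: "inv x \<cdot> (inv x \<cdot> (x \<cdot> z)) = inv x \<cdot> z"
  using ix_x0 by (metis assoc)
lemma csax: "inv (x \<cdot> (y \<cdot> x)) \<cdot> (x \<cdot> (y \<cdot> x)) = inv x \<cdot> x"
  using csax0 by simp

lemma idpt_inv:
  assumes ff: "f \<cdot> f = f"
  shows "inv f = f"
proof -
  let ?u = "f \<cdot> inv f"
  have uu: "?u \<cdot> ?u = ?u" by simp
  have "inv f = inv f \<cdot> (f \<cdot> f) \<cdot> inv f" using ff by simp
  also have "\<dots> = (inv f \<cdot> f) \<cdot> (f \<cdot> inv f)" by simp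
  also have "\<dots> = ?u \<cdot> ?u" by (simp only: comm[of f, symmetric])
  finally have i1: "inv f = ?u" using uu by simp
  have "f = ?u \<cdot> f" using idem0[of f] by simp
  then have "f = inv f \<cdot> f" using i1 by simp
  then have "?u = f" using comm[of f] by simp
  then show ?thesis using i1 by simp
qed

lemma sandwich:
  assumes ff: "f \<cdot> f = f" and fs: "f \<cdot> s = s" and sf: "s \<cdot> f = s"
  shows "s = inv (f \<cdot> (e \<cdot> f)) \<cdot> (f \<cdot> (e \<cdot> (s \<cdot> (e \<cdot> (f \<cdot> inv (f \<cdot> (e \<cdot> f)))))))"
proof -
  let ?g = "f \<cdot> (e \<cdot> f)"
  have fi: "inv f = f" using idpt_inv[OF ff] .
  have g1: "inv ?g \<cdot> ?g = f" using csax[of f e] fi ff by simp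
  have g2: "?g \<cdot> inv ?g = f" using g1 comm[of ?g] by simp
  have "s = f \<cdot> (s \<cdot> f)" using fs sf by simp
  also have "\<dots> = (inv ?g \<cdot> ?g) \<cdot> (s \<cdot> (?g \<cdot> inv ?g))" using g1 g2 by simp
  also have "\<dots> = inv ?g \<cdot> (f \<cdot> (e \<cdot> ((f \<cdot> (s \<cdot> f)) \<cdot> (e \<cdot> (f \<cdot> inv ?g)))))" by simp
  also have "f \<cdot> (s \<cdot> f) = s" using fs sf by simp
  finally show ?thesis by simp
qed

lemma inv_unique:
  assumes "s \<cdot> (y \<cdot> s) = s" "y \<cdot> (s \<cdot> y) = y" "s \<cdot> y = y \<cdot> s"
  shows "y = inv s"
proof -
  let ?f = "s \<cdot> inv s" and ?g = "s \<cdot> y"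
  have g_f: "?g = ?g \<cdot> ?f"
  proof -
    have "?g \<cdot> ?f = y \<cdot> (s \<cdot> (inv s \<cdot> s))" using assms(3) by simp
    then show ?thesis using assms(3) by simp
  qed
  have f_gf: "?f = ?g \<cdot> ?f"
  proof -
    have "?g \<cdot> ?f = (s \<cdot> (y \<cdot> s)) \<cdot> inv s" by simp
    then show ?thesis using assms(1) by simp
  qed
  have "?f = ?g" using g_f f_gf by simp
  have "y = ?g \<cdot> y"
  proof -
    have "?g \<cdot> y = (y \<cdot> s) \<cdot> y" using assms(3) by simp
    then show ?thesis using assms(2) by simp
  qed
  also have "\<dots> = (inv s \<cdot> s) \<cdot> y" using \<open>?f = ?g\<close> comm[of s] by simp
  also have "\<dots> = inv s \<cdot> (s \<cdot> y)" by simp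
  also have "\<dots> = inv s \<cdot> ?f" using \<open>?f = ?g\<close> by simp
  also have "\<dots> = inv s" by simp
  finally show ?thesis .
qed

end




datatype 'x gen = G 'x | Pg 'x 'x

type_synonym 'x mel = "'x \<times> 'x gen fg \<times> 'x"

definition Pw :: "'x \<Rightarrow> 'x \<Rightarrow> 'x \<Rightarrow> 'x gen fg" where
  "Pw x0 l j = (if l = x0 \<and> j = x0 then 0 else fg_abs [(Pg l j, True)])"

fun mmul :: "'x \<Rightarrow> 'x mel \<Rightarrow> 'x mel \<Rightarrow> 'x mel" where
  "mmul x0 (i, g, l) (j, h, m) = (i, g + Pw x0 l j + h, m)"

fun minv :: "'x \<Rightarrow> 'x mel \<Rightarrow> 'x mel" where
  "minv x0 (i, g, l) = (i, - Pw x0 l i - g - Pw x0 l i, l)"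

lemma fg_rep_single: "fg_rep (fg_abs [a]) = [a]"
  by (simp add: fg_abs_inverse)

context cs
begin

context
  fixes e assumes ee: "e \<cdot> e = e"
begin

definition inH where "inH h \<longleftrightarrow> e \<cdot> h = h \<and> h \<cdot> e = h"

lemma ee_r: "e \<cdot> (e \<cdot> z) = e \<cdot> z" using ee by (metis assoc)
lemma inv_e: "inv e = e" using idpt_inv[OF ee] .

lemma H_l: "inH h \<Longrightarrow> e \<cdot> h = h" and H_r: "inH h \<Longrightarrow> h \<cdot> e = h"
  by (auto simp: inH_def)
lemma H_l_r: "inH h \<Longrightarrow> e \<cdot> (h \<cdot> z) = h \<cdot> z" and H_r_r: "inH h \<Longrightarrow> h \<cdot> (e \<cdot> z) = h \<cdot> z"
  by (auto simp: inH_def simp flip: assoc)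

lemma H_invl: "inH h \<Longrightarrow> inv h \<cdot> h = e"
proof -
  assume h: "inH h"
  have "inv (e \<cdot> (h \<cdot> e)) \<cdot> (e \<cdot> (h \<cdot> e)) = inv e \<cdot> e" by (rule csax)
  then show ?thesis using h by (simp add: inH_def inv_e ee)
qed
lemma H_invr: "inH h \<Longrightarrow> h \<cdot> inv h = e"
  using H_invl comm by metis
lemma H_inv: "inH h \<Longrightarrow> inH (inv h)"
proof -
  assume h: "inH h"
  have "inv h = inv h \<cdot> (h \<cdot> inv h)" by simp
  then have 1: "inv h = inv h \<cdot> e" using H_invr[OF h] by simp
  have "inv h = (inv h \<cdot> h) \<cdot> inv h" by simp
  then have 2: "inv h = e \<cdot> inv h" using H_invl[OF h] by simp
  show ?thesis using 1 2 by (simp add: inH_def)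
qed
lemma H_invl_r: "inH h \<Longrightarrow> inv h \<cdot> (h \<cdot> z) = e \<cdot> z"
  using H_invl by (metis assoc)
lemma H_invr_r: "inH h \<Longrightarrow> h \<cdot> (inv h \<cdot> z) = e \<cdot> z"
  using H_invr by (metis assoc)
lemma H_mul: "inH h \<Longrightarrow> inH k \<Longrightarrow> inH (h \<cdot> k)"
  by (simp add: inH_def) (metis assoc)
lemma H_e: "inH e" by (simp add: inH_def ee)
lemma H_sand: "inH (e \<cdot> (s \<cdot> e))"
  by (simp add: inH_def ee_r) (metis assoc ee)

lemmas Hsimps = H_l H_r H_l_r H_r_r H_invl H_invr H_invl_r H_invr_r H_inv H_mul H_e H_sand ee ee_r inv_e

lemma H_unique: "inH u \<Longrightarrow> inH v \<Longrightarrow> u \<cdot> v = e \<Longrightarrow> u = inv v"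
proof -
  assume u: "inH u" and v: "inH v" and uv: "u \<cdot> v = e"
  have "u = u \<cdot> (v \<cdot> inv v)" using u v by (simp add: Hsimps)
  also have "\<dots> = (u \<cdot> v) \<cdot> inv v" by simp
  also have "\<dots> = inv v" using uv v by (simp add: Hsimps)
  finally show ?thesis .
qed

lemma abstract_inv:
  assumes ae: "a \<cdot> e = a" and eb: "e \<cdot> b = b" and ba: "b \<cdot> a = P"
    and P: "inH P" and W: "inH W"
  shows "inv (a \<cdot> (W \<cdot> b)) = a \<cdot> (inv P \<cdot> (inv W \<cdot> (inv P \<cdot> b)))"
proof -
  have ae_r: "a \<cdot> (e \<cdot> z) = a \<cdot> z" for z using ae by (metis assoc)
  have ba_r: "b \<cdot> (a \<cdot> z) = P \<cdot> z" for z using ba by (metis assoc)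
  let ?s = "a \<cdot> (W \<cdot> b)" and ?y = "a \<cdot> (inv P \<cdot> (inv W \<cdot> (inv P \<cdot> b)))"
  have sy: "?s \<cdot> ?y = a \<cdot> (inv P \<cdot> b)"
    using P W by (simp add: Hsimps ba_r ae_r)
  have ys: "?y \<cdot> ?s = a \<cdot> (inv P \<cdot> b)"
    using P W by (simp add: Hsimps ba_r ae_r)
  have sys: "?s \<cdot> (?y \<cdot> ?s) = ?s"
    using P W by (simp add: Hsimps ba_r ae_r eb)
  have ysy: "?y \<cdot> (?s \<cdot> ?y) = ?y"
    using P W by (simp add: Hsimps ba_r ae_r eb)
  show ?thesis using inv_unique[OF sys ysy] sy ys by simp
qed

end

lemma gen_lemma:
  assumes ee: "e \<cdot> e = e"
  shows "x \<cdot> (inv (e \<cdot> (x \<cdot> e)) \<cdot> x) = x"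
proof -
  let ?a = "e \<cdot> (x \<cdot> e)" and ?f = "x \<cdot> inv x"
  let ?z = "x \<cdot> (inv ?a \<cdot> x)"
  have ff: "?f \<cdot> ?f = ?f" by simp
  have fz: "?f \<cdot> ?z = ?z" by simp
  have zf: "?z \<cdot> ?f = ?z" by simp
  have fx: "?f \<cdot> x = x" by simp
  have xf: "x \<cdot> ?f = x" by simp
  have Ha: "inH e ?a" using H_sand[OF ee] .
  have eze: "e \<cdot> (?z \<cdot> e) = ?a"
  proof -
    have "e \<cdot> (?z \<cdot> e) = ?a \<cdot> (inv ?a \<cdot> ?a)"
      using Ha H_inv[OF ee Ha] by (simp add: Hsimps[OF ee])
    then show ?thesis by simp
  qed
  have "?z = inv (?f \<cdot> (e \<cdot> ?f)) \<cdot> (?f \<cdot> (e \<cdot> (?z \<cdot> (e \<cdot> (?f \<cdot> inv (?f \<cdot> (e \<cdot> ?f)))))))"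
    by (rule sandwich[OF ff fz zf])
  also have "\<dots> = inv (?f \<cdot> (e \<cdot> ?f)) \<cdot> (?f \<cdot> ((e \<cdot> (?z \<cdot> e)) \<cdot> (?f \<cdot> inv (?f \<cdot> (e \<cdot> ?f)))))"
    by (simp only: assoc)
  also have "\<dots> = inv (?f \<cdot> (e \<cdot> ?f)) \<cdot> (?f \<cdot> ((e \<cdot> (x \<cdot> e)) \<cdot> (?f \<cdot> inv (?f \<cdot> (e \<cdot> ?f)))))"
    by (simp only: eze)
  also have "\<dots> = inv (?f \<cdot> (e \<cdot> ?f)) \<cdot> (?f \<cdot> (e \<cdot> (x \<cdot> (e \<cdot> (?f \<cdot> inv (?f \<cdot> (e \<cdot> ?f)))))))"
    by (simp only: assoc)
  also have "\<dots> = x"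
    by (rule sandwich[OF ff fx xf, symmetric])
  finally show ?thesis .
qed

end


context cs
begin

context
  fixes gen :: "'x \<Rightarrow> 'a" and x0 :: 'x
begin

definition "e0 = gen x0 \<cdot> inv (gen x0)"
lemma e0e0: "e0 \<cdot> e0 = e0" by (simp add: e0_def)

lemmas HS = Hsimps[OF e0e0]

definition "K = e0 \<cdot> (gen x0 \<cdot> (gen x0 \<cdot> e0))"
definition "bb l = e0 \<cdot> gen l"
definition "aa i = gen i \<cdot> (e0 \<cdot> inv K)"

fun Gv where
  "Gv (G x) = K \<cdot> inv (e0 \<cdot> (gen x \<cdot> e0))"
| "Gv (Pg l j) = e0 \<cdot> (gen l \<cdot> (gen j \<cdot> (e0 \<cdot> inv K)))"

fun lev where
  "lev (g, True) = Gv g"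
| "lev (g, False) = inv (Gv g)"

fun ev where
  "ev [] = e0"
| "ev (a # w) = lev a \<cdot> ev w"

fun psi where
  "psi (i, w, l) = aa i \<cdot> (ev (fg_rep w) \<cdot> bb l)"

lemma H_K: "inH e0 K"
  using H_sand[OF e0e0, of "gen x0 \<cdot> gen x0"] by (simp add: K_def)

lemma H_Gv: "inH e0 (Gv g)"
proof (cases g)
  case (G x)
  then show ?thesis using H_K by (simp add: HS)
next
  case (Pg l j)
  have "inH e0 (e0 \<cdot> ((gen l \<cdot> gen j) \<cdot> e0) \<cdot> inv K)"
    using H_K H_sand[OF e0e0, of "gen l \<cdot> gen j"] by (simp only: HS)
  then show ?thesis using Pg by simp
qed

lemma H_lev: "inH e0 (lev a)"
  by (cases a; cases "snd a") (auto simp: H_Gv HS)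

lemma H_ev: "inH e0 (ev w)"
  by (induction w) (auto simp: H_lev HS)

lemma lev_flip: "lev (flip a) \<cdot> (lev a \<cdot> z) = e0 \<cdot> z"
  by (cases a; cases "snd a") (auto simp: H_Gv HS)

lemma ev_cancel1: "ev (cancel1 a w) = ev (a # w)"
proof (cases w)
  case Nil then show ?thesis by simp
next
  case (Cons b w')
  show ?thesis
  proof (cases "b = flip a")
    case True
    have "ev (a # w) = lev (flip (flip a)) \<cdot> (lev (flip a) \<cdot> ev w')"
      using Cons True by simp
    also have "\<dots> = ev w'" by (simp only: lev_flip) (simp add: H_ev HS)
    finally show ?thesis using Cons True by simp
  qed (use Cons in simp)
qed

lemma ev_red: "ev (red w) = ev w"
  by (induction w) (simp_all add: ev_cancel1)

lemma ev_append: "ev (u @ v) = ev u \<cdot> ev v"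
  by (induction u) (auto simp: H_ev HS)

lemma ev_plus: "ev (fg_rep (x + y)) = ev (fg_rep x) \<cdot> ev (fg_rep y)"
  by (simp add: fg_rep_plus ev_red ev_append)

lemma ev_zero: "ev (fg_rep 0) = e0"
  by (simp add: fg_rep_zero)

lemma ev_uminus: "ev (fg_rep (- x)) = inv (ev (fg_rep x))"
proof -
  have "ev (fg_rep (- x)) \<cdot> ev (fg_rep x) = e0"
    using ev_plus[of "- x" x] by (simp add: ev_zero)
  then show ?thesis using H_unique[OF e0e0 H_ev H_ev] by blast
qed

lemma ev_Pw: "ev (fg_rep (Pw x0 l j)) = bb l \<cdot> aa j"
proof (cases "l = x0 \<and> j = x0")
  case True
  have "bb l \<cdot> aa j = K \<cdot> inv K" using True by (simp add: bb_def aa_def K_def)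
  also have "\<dots> = e0" using H_K by (simp add: HS)
  finally show ?thesis using True by (simp add: Pw_def fg_rep_zero)
next
  case False
  then have "Pw x0 l j = fg_abs [(Pg l j, True)]" unfolding Pw_def by (simp only: if_False)
  then show ?thesis using H_K by (simp add: fg_rep_single bb_def aa_def HS)
qed

lemma psi_mul: "psi (mmul x0 m1 m2) = psi m1 \<cdot> psi m2"
  by (cases m1; cases m2) (simp add: ev_plus ev_Pw)

lemma aa_e: "aa i \<cdot> e0 = aa i" using H_K by (simp add: aa_def HS)
lemma e_bb: "e0 \<cdot> bb l = bb l" by (simp add: bb_def HS)
lemma H_P: "inH e0 (bb l \<cdot> aa j)" using ev_Pw H_ev by metis

lemma psi_inv: "psi (minv x0 m) = inv (psi m)"
proof (cases m)
  case (fields i w l)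
  have "inv (psi m) = aa i \<cdot> (inv (bb l \<cdot> aa i) \<cdot> (inv (ev (fg_rep w)) \<cdot> (inv (bb l \<cdot> aa i) \<cdot> bb l)))"
    using abstract_inv[OF e0e0 aa_e e_bb HOL.refl H_P H_ev] fields by simp
  then show ?thesis using fields
    by (simp del: add_uminus_conv_diff add: diff_conv_add_uminus ev_plus ev_uminus ev_Pw)
qed

lemma psi_gen: "psi (x, fg_abs [(G x, True)], x) = gen x"
proof -
  have "psi (x, fg_abs [(G x, True)], x) = gen x \<cdot> (inv (e0 \<cdot> (gen x \<cdot> e0)) \<cdot> gen x)"
    using H_K H_inv[OF e0e0 H_sand[OF e0e0, of "gen x"]] by (simp add: fg_rep_single aa_def bb_def HS)
  also have "\<dots> = gen x" by (rule gen_lemma[OF e0e0])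
  finally show ?thesis .
qed

fun teval :: "'x trm \<Rightarrow> 'a" where
  "teval (Var x) = gen x"
| "teval (Mul s t) = teval s \<cdot> teval t"
| "teval (Inv s) = inv (teval s)"

end
end

fun phi :: "'x \<Rightarrow> 'x trm \<Rightarrow> 'x mel" where
  "phi x0 (Var x) = (x, fg_abs [(G x, True)], x)"
| "phi x0 (Mul s t) = mmul x0 (phi x0 s) (phi x0 t)"
| "phi x0 (Inv s) = minv x0 (phi x0 s)"

lemma (in cs) psi_phi: "psi gen x0 (phi x0 t) = teval gen t"
  by (induction t) (simp_all only: phi.simps teval.simps psi_gen psi_mul psi_inv)




interpretation fcs: cs fcss_mul fcss_inv
proof
  fix x y z :: "'a fcss"
  show "fcss_mul (fcss_mul x y) z = fcss_mul x (fcss_mul y z)" by transfer (rule css_eq.ax_assoc)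
  show "fcss_mul (fcss_mul x (fcss_inv x)) x = x" by transfer (rule css_eq.ax_idem)
  show "fcss_mul x (fcss_inv x) = fcss_mul (fcss_inv x) x" by transfer (rule css_eq.ax_comm)
  show "fcss_inv (fcss_inv x) = x" by transfer (rule css_eq.ax_invinv)
  show "fcss_mul (fcss_inv (fcss_mul (fcss_mul x y) x)) (fcss_mul (fcss_mul x y) x) = fcss_mul (fcss_inv x) x"
    by transfer (rule css_eq.ax_cs)
qed


lemmas gsimps = add.assoc diff_conv_add_uminus minus_add

lemma mm_assoc: "mmul x0 (mmul x0 a b) c = mmul x0 a (mmul x0 b c)"
  by (cases a; cases b; cases c) (simp add: add.assoc)
lemma mm_idem: "mmul x0 (mmul x0 a (minv x0 a)) a = a"
  by (cases a) (simp add: algebra_simps)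
lemma mm_comm: "mmul x0 a (minv x0 a) = mmul x0 (minv x0 a) a"
  by (cases a) (simp add: algebra_simps)
lemma mm_invinv: "minv x0 (minv x0 a) = a"
  by (cases a) (simp add: algebra_simps)
lemma mm_cs: "mmul x0 (minv x0 (mmul x0 (mmul x0 a b) a)) (mmul x0 (mmul x0 a b) a) = mmul x0 (minv x0 a) a"
  by (cases a; cases b) (simp add: algebra_simps)

lemma phi_resp: "css_eq s t \<Longrightarrow> phi x0 s = phi x0 t"
  apply (induction rule: css_eq.induct)
  apply simp_all
  apply (rule mm_assoc mm_idem mm_comm mm_invinv mm_cs)+
  done

lift_definition Phi :: "'x \<Rightarrow> 'x fcss \<Rightarrow> 'x mel" is phi
  by (rule phi_resp)

lemma teval_abs: "fcs.teval (\<lambda>x. abs_fcss (Var x)) t = abs_fcss t"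
  by (induction t) (simp_all add: fcss_mul.abs_eq fcss_inv.abs_eq)

lemma psi_Phi: "fcs.psi (\<lambda>x. abs_fcss (Var x)) x0 (Phi x0 a) = a"
  by (induct a rule: fcss.abs_induct) (simp add: Phi.abs_eq fcs.psi_phi teval_abs)

lemma Phi_inj: "Phi x0 a = Phi x0 b \<Longrightarrow> a = b"
  by (metis psi_Phi)

lemma Phi_mul: "Phi x0 (fcss_mul a b) = mmul x0 (Phi x0 a) (Phi x0 b)"
  by transfer simp
lemma Phi_inv: "Phi x0 (fcss_inv a) = minv x0 (Phi x0 a)"
  by transfer simp
lemma Phi_var: "Phi x0 (abs_fcss (Var x)) = (x, fg_abs [(G x, True)], x)"
  by (simp add: Phi.abs_eq)




section \<open>Word combinatorics\<close>

lemma reduced_append: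
  "reduced (u @ v) \<longleftrightarrow> reduced u \<and> reduced v \<and> (u \<noteq> [] \<and> v \<noteq> [] \<longrightarrow> hd v \<noteq> flip (last u))"
proof (induction u rule: reduced.induct)
  case 1 then show ?case by simp
next
  case (2 a) then show ?case by (cases v) auto
next
  case (3 a b w) then show ?case by auto
qed

lemma hd_winv: "w \<noteq> [] \<Longrightarrow> hd (winv w) = flip (last w)"
  by (simp add: winv_def hd_rev last_map)
lemma last_winv: "w \<noteq> [] \<Longrightarrow> last (winv w) = flip (hd w)"
  by (simp add: winv_def last_rev hd_map)
lemma winv_Nil[simp]: "winv w = [] \<longleftrightarrow> w = []" by (simp add: winv_def)

lemma reduced_winv: "reduced w \<Longrightarrow> reduced (winv w)"
proof (induction w)
  case Nil then show ?case by (simp add: winv_def)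
next
  case (Cons a w)
  have rw: "reduced w" using Cons.prems reduced_tl by blast
  have j: "w \<noteq> [] \<Longrightarrow> hd w \<noteq> flip a" using Cons.prems by (cases w) auto
  show ?case unfolding winv_Cons reduced_append
    using Cons.IH[OF rw] j by (auto simp: last_winv)
qed

lemma fg_rep_uminus': "fg_rep (- x) = winv (fg_rep x)"
  by (simp add: fg_rep_uminus red_reduced reduced_winv fg_rep_reduced)

lemma fg_rep_plus':
  assumes "fg_rep x \<noteq> [] \<Longrightarrow> fg_rep y \<noteq> [] \<Longrightarrow> hd (fg_rep y) \<noteq> flip (last (fg_rep x))"
  shows "fg_rep (x + y) = fg_rep x @ fg_rep y"
  using assms by (simp add: fg_rep_plus red_reduced reduced_append fg_rep_reduced)

lemma fg_rep_eq_Nil: "fg_rep x = [] \<longleftrightarrow> x = 0"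
  by (metis fg_rep_inject fg_rep_zero)

lemma flip_eq_swap: "(a = flip b) = (flip a = b)" by auto

lemma noncomm_core:
  fixes \<alpha> \<beta> h :: "'g fg"
  assumes a: "\<alpha> \<noteq> 0" and b: "\<beta> \<noteq> 0" and hn: "h \<noteq> 0"
    and c1: "hd (fg_rep h) \<noteq> hd (fg_rep \<alpha>)"
    and c2: "hd (fg_rep h) \<noteq> flip (last (fg_rep \<alpha>))"
    and c3: "last (fg_rep h) \<noteq> flip (hd (fg_rep \<beta>))"
    and c4: "last (fg_rep h) \<noteq> last (fg_rep \<beta>)"
  shows "\<alpha> + (h + (\<beta> - h)) \<noteq> (h + (\<beta> - h)) + \<alpha>"
proof -
  let ?A = "fg_rep \<alpha>" and ?B = "fg_rep \<beta>" and ?C = "fg_rep h"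
  have A: "?A \<noteq> []" and B: "?B \<noteq> []" and C: "?C \<noteq> []"
    using a b hn by (auto simp: fg_rep_eq_Nil)
  have r1: "fg_rep (\<beta> - h) = ?B @ winv ?C"
    unfolding diff_conv_add_uminus by (subst fg_rep_plus') (use C c4 in \<open>auto simp: fg_rep_uminus' hd_winv\<close>)
  have r2: "fg_rep (h + (\<beta> - h)) = ?C @ ?B @ winv ?C"
  proof -
    have "hd ?B \<noteq> flip (last ?C)" using c3 by auto
    then show ?thesis by (subst fg_rep_plus') (use B C r1 in auto)
  qed
  have r3: "fg_rep (\<alpha> + (h + (\<beta> - h))) = ?A @ ?C @ ?B @ winv ?C"
    by (subst fg_rep_plus') (use A C c2 r2 in auto)
  have r4: "fg_rep ((h + (\<beta> - h)) + \<alpha>) = (?C @ ?B @ winv ?C) @ ?A"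
    by (subst fg_rep_plus') (use A C c1 r2 in \<open>auto simp: last_winv\<close>)
  have "hd (fg_rep (\<alpha> + (h + (\<beta> - h)))) \<noteq> hd (fg_rep ((h + (\<beta> - h)) + \<alpha>))"
    using r3 r4 A C c1 by simp
  then show ?thesis by metis
qed


lemma card_exclude2:
  fixes a :: "nat \<Rightarrow> 'l"
  assumes ia: "inj_on a {..<4}"
  shows "2 \<le> card {i\<in>{..<4::nat}. a i \<noteq> f1 \<and> a i \<noteq> f2}"
proof -
  let ?I = "{i\<in>{..<4::nat}. a i \<noteq> f1 \<and> a i \<noteq> f2}"
  let ?N = "{i\<in>{..<4::nat}. \<not> (a i \<noteq> f1 \<and> a i \<noteq> f2)}"
  have "card ?N \<le> card {f1, f2}"
    by (rule card_inj_on_le[of a]) (use ia in \<open>auto simp: inj_on_def\<close>)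
  also have "\<dots> \<le> 2" by (simp add: card_insert_if)
  finally have n: "card ?N \<le> 2" .
  have u: "?I \<union> ?N = {..<4::nat}" by auto
  have "card (?I \<union> ?N) = card ?I + card ?N" by (rule card_Un_disjoint) auto
  then have "card ?I + card ?N = card {..<4::nat}" using u by simp
  then show ?thesis using n by simp
qed

lemma pick4:
  fixes a b :: "nat \<Rightarrow> 'l" and pt :: "nat \<Rightarrow> nat"
  assumes ia: "inj_on a {..<4}" and ib: "inj_on b {..<4}"
  shows "\<exists>i<4. \<exists>j<4. j \<noteq> pt i \<and> a i \<noteq> fa \<and> a i \<noteq> fb \<and> b j \<noteq> la \<and> b j \<noteq> lb"
proof -
  let ?I = "{i\<in>{..<4::nat}. a i \<noteq> fa \<and> a i \<noteq> fb}"
  let ?J = "{j\<in>{..<4::nat}. b j \<noteq> la \<and> b j \<noteq> lb}"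
  have cI: "2 \<le> card ?I" by (rule card_exclude2[OF ia])
  have cJ: "2 \<le> card ?J" by (rule card_exclude2[OF ib])
  obtain i where i: "i \<in> ?I" using cI by (metis card.empty ex_in_conv not_numeral_le_zero)
  have "card ?J - card {pt i} \<le> card (?J - {pt i})" by (rule diff_card_le_card_Diff) simp
  then have "card ?J - 1 \<le> card (?J - {pt i})" by simp
  then have "card (?J - {pt i}) \<noteq> 0" using cJ by linarith
  then have "?J - {pt i} \<noteq> {}" by (metis card.empty)
  then obtain j where j: "j \<in> ?J" "j \<noteq> pt i" by blast
  show ?thesis using i j by blast
qed


definition gl :: "'x \<Rightarrow> 'x gen fg" where "gl x = fg_abs [(G x, True)]"

lemma Pw00[simp]: "Pw x0 x0 x0 = 0" by (simp add: Pw_def)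

definition Hset :: "'x \<Rightarrow> 'x gen fg set" where
  "Hset x0 = {h. \<exists>c. Phi x0 c = (x0, h, x0)}"

lemma Hset_plus: "h \<in> Hset x0 \<Longrightarrow> k \<in> Hset x0 \<Longrightarrow> h + k \<in> Hset x0"
  unfolding Hset_def
proof clarify
  fix c d assume "Phi x0 c = (x0, h, x0)" "Phi x0 d = (x0, k, x0)"
  then have "Phi x0 (fcss_mul c d) = (x0, h + k, x0)" by (simp add: Phi_mul)
  then show "\<exists>c. Phi x0 c = (x0, h + k, x0)" by blast
qed

lemma Hset_uminus: "h \<in> Hset x0 \<Longrightarrow> - h \<in> Hset x0"
  unfolding Hset_def
proof clarify
  fix c assume "Phi x0 c = (x0, h, x0)"
  then have "Phi x0 (fcss_inv c) = (x0, - h, x0)" by (simp add: Phi_inv)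
  then show "\<exists>c. Phi x0 c = (x0, - h, x0)" by blast
qed

lemma Hset_gl: "gl x0 \<in> Hset x0"
  unfolding Hset_def gl_def by (rule CollectI, rule exI[of _ "abs_fcss (Var x0)"], rule Phi_var)

lemma Hset_k2: "Pw x0 x0 y + gl y + Pw x0 y x0 \<in> Hset x0"
proof -
  let ?X = "abs_fcss (Var x0)" and ?Y = "abs_fcss (Var y)"
  let ?E = "fcss_mul ?X (fcss_inv ?X)"
  have "Phi x0 (fcss_mul (fcss_mul ?E ?Y) ?E) = (x0, Pw x0 x0 y + gl y + Pw x0 y x0, x0)"
    by (simp add: Phi_mul Phi_inv Phi_var gl_def algebra_simps)
  then show ?thesis unfolding Hset_def by blast
qed

context
  fixes x0 y1 :: 'x
  assumes y1: "y1 \<noteq> x0"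
begin

fun kk :: "nat \<Rightarrow> 'x gen fg" where
  "kk 0 = gl x0"
| "kk (Suc 0) = - gl x0"
| "kk (Suc (Suc 0)) = Pw x0 x0 y1 + gl y1 + Pw x0 y1 x0"
| "kk _ = - (Pw x0 x0 y1 + gl y1 + Pw x0 y1 x0)"

fun wd :: "nat \<Rightarrow> 'x gen letter list" where
  "wd 0 = [(G x0, True)]"
| "wd (Suc 0) = [(G x0, False)]"
| "wd (Suc (Suc 0)) = [(Pg x0 y1, True), (G y1, True), (Pg y1 x0, True)]"
| "wd _ = [(Pg y1 x0, False), (G y1, False), (Pg x0 y1, False)]"

lemma k2_rep: "fg_rep (Pw x0 x0 y1 + gl y1 + Pw x0 y1 x0) = [(Pg x0 y1, True), (G y1, True), (Pg y1 x0, True)]"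
  using y1 by (simp add: Pw_def gl_def fg_rep_plus fg_rep_single)

lemma kk_rep: "fg_rep (kk i) = wd i"
  using k2_rep by (cases i rule: kk.cases) (simp_all add: gl_def fg_rep_single fg_rep_uminus' winv_def)

lemma kk_H: "kk i \<in> Hset x0"
  by (cases i rule: kk.cases) (simp_all add: Hset_gl Hset_k2 Hset_uminus)

definition pt :: "nat \<Rightarrow> nat" where
  "pt i = (if i = 0 then 1 else if i = 1 then 0 else if i = 2 then 3 else 2)"

lemma lt4: "{..<4::nat} = {0, 1, 2, 3}" by auto

lemma wd_hd_inj: "inj_on (\<lambda>i. hd (wd i)) {..<4}"
  using y1 unfolding lt4 by (simp add: numeral_eq_Suc)

lemma wd_last_inj: "inj_on (\<lambda>i. last (wd i)) {..<4}"
  using y1 unfolding lt4 by (simp add: numeral_eq_Suc)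

lemma wd_junction: "i < 4 \<Longrightarrow> j < 4 \<Longrightarrow> j \<noteq> pt i \<Longrightarrow> hd (wd j) \<noteq> flip (last (wd i))"
  using y1 by (auto simp: pt_def less_Suc_eq numeral_eq_Suc)

lemma wd_ne: "wd i \<noteq> []" by (cases i rule: wd.cases) auto

lemma noncomm:
  fixes \<alpha> \<beta> :: "'x gen fg"
  assumes a: "\<alpha> \<noteq> 0" and b: "\<beta> \<noteq> 0"
  shows "\<exists>h\<in>Hset x0. \<alpha> + (h + (\<beta> - h)) \<noteq> h + (\<beta> - h) + \<alpha>"
proof -
  obtain i j where ij: "i < 4" "j < 4" "j \<noteq> pt i"
    "hd (wd i) \<noteq> hd (fg_rep \<alpha>)" "hd (wd i) \<noteq> flip (last (fg_rep \<alpha>))"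
    "last (wd j) \<noteq> flip (hd (fg_rep \<beta>))" "last (wd j) \<noteq> last (fg_rep \<beta>)"
    using pick4[OF wd_hd_inj wd_last_inj, where fa="hd (fg_rep \<alpha>)" and fb="flip (last (fg_rep \<alpha>))"
        and pt=pt and la="flip (hd (fg_rep \<beta>))" and lb="last (fg_rep \<beta>)"] by blast
  let ?h = "kk i + kk j"
  have rep: "fg_rep ?h = wd i @ wd j"
    using fg_rep_plus'[of "kk i" "kk j"] by (simp add: kk_rep wd_junction ij)
  have hn: "?h \<noteq> 0" using rep wd_ne by (metis Nil_is_append_conv fg_rep_zero)
  have "\<alpha> + (?h + (\<beta> - ?h)) \<noteq> ?h + (\<beta> - ?h) + \<alpha>"
    by (rule noncomm_core[OF a b hn]) (use ij wd_ne in \<open>simp_all add: rep\<close>)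
  moreover have "?h \<in> Hset x0" by (simp add: Hset_plus kk_H)
  ultimately show ?thesis by blast
qed

end


section \<open>Separation of model elements\<close>

definition hdv :: "'x \<Rightarrow> 'x \<Rightarrow> 'x \<Rightarrow> 'x mel \<Rightarrow> 'x gen fg" where
  "hdv x0 y z m = (case m of (i, g, l) \<Rightarrow>
     gl x0 + Pw x0 x0 y + gl y + Pw x0 y i + g + Pw x0 l z + gl z + Pw x0 z x0 + gl x0)"

lemma hdv_cancel:
  fixes a b u v :: "'g::group_add"
  shows "a + u + b = a + v + b \<longleftrightarrow> u = v"
  by (simp add: add.assoc)

lemma hdv_eq: "hdv x0 y z (i, g, l) = hdv x0 y z (i', g', l') \<longleftrightarrow>
   Pw x0 y i + g + Pw x0 l z = Pw x0 y i' + g' + Pw x0 l' z"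
proof -
  have "hdv x0 y z (i, g, l) = (gl x0 + Pw x0 x0 y + gl y) + (Pw x0 y i + g + Pw x0 l z) + (gl z + Pw x0 z x0 + gl x0)"
    "hdv x0 y z (i', g', l') = (gl x0 + Pw x0 x0 y + gl y) + (Pw x0 y i' + g' + Pw x0 l' z) + (gl z + Pw x0 z x0 + gl x0)"
    by (simp_all add: hdv_def add.assoc)
  then show ?thesis by (simp only: hdv_cancel)
qed

context
  fixes x0 y1 :: 'x
  assumes y1: "y1 \<noteq> x0"
begin

lemma hd_left: "hd (fg_rep (Pw x0 y1 i - Pw x0 x0 i)) = (Pg y1 i, True)"
proof (cases "i = x0")
  case True then show ?thesis using y1 by (simp add: Pw_def fg_rep_single)
next
  case False
  then have "Pw x0 y1 i - Pw x0 x0 i = fg_abs [(Pg y1 i, True)] + - fg_abs [(Pg x0 i, True)]"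
    using y1 by (simp add: Pw_def)
  then show ?thesis using y1
    by (simp del: add_uminus_conv_diff add: fg_rep_plus fg_rep_uminus' fg_rep_single winv_def)
qed

lemma last_right: "last (fg_rep (- Pw x0 l x0 + Pw x0 l y1)) = (Pg l y1, True)"
proof (cases "l = x0")
  case True then show ?thesis using y1 by (simp add: Pw_def fg_rep_single)
next
  case False
  then have "- Pw x0 l x0 + Pw x0 l y1 = - fg_abs [(Pg l x0, True)] + fg_abs [(Pg l y1, True)]"
    using y1 by (simp add: Pw_def)
  then show ?thesis using y1
    by (simp add: fg_rep_plus fg_rep_uminus' fg_rep_single winv_def)
qed

lemma sep_hdv:
  assumes "\<forall>y z. hdv x0 y z m = hdv x0 y z m'"
  shows "m = m'"
proof -
  obtain i g l where m: "m = (i, g, l)" by (cases m) auto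
  obtain i' g' l' where m': "m' = (i', g', l')" by (cases m') auto
  have Q: "Pw x0 y i + g + Pw x0 l z = Pw x0 y i' + g' + Pw x0 l' z" for y z
    using assms m m' hdv_eq by metis
  have Q00: "Pw x0 x0 i + g + Pw x0 l x0 = Pw x0 x0 i' + g' + Pw x0 l' x0" using Q .
  have "Pw x0 y1 i - Pw x0 x0 i = (Pw x0 y1 i + g + Pw x0 l x0) - (Pw x0 x0 i + g + Pw x0 l x0)"
    by (simp add: diff_conv_add_uminus add.assoc minus_add del: add_uminus_conv_diff)
  also have "\<dots> = (Pw x0 y1 i' + g' + Pw x0 l' x0) - (Pw x0 x0 i' + g' + Pw x0 l' x0)"
    using Q[of y1 x0] Q00 by simp
  also have "\<dots> = Pw x0 y1 i' - Pw x0 x0 i'"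
    by (simp add: diff_conv_add_uminus add.assoc minus_add del: add_uminus_conv_diff)
  finally have "hd (fg_rep (Pw x0 y1 i - Pw x0 x0 i)) = hd (fg_rep (Pw x0 y1 i' - Pw x0 x0 i'))"
    by simp
  then have ii: "i = i'" by (simp add: hd_left)
  have "- Pw x0 l x0 + Pw x0 l y1 = - (Pw x0 x0 i + g + Pw x0 l x0) + (Pw x0 x0 i + g + Pw x0 l y1)"
    by (simp add: diff_conv_add_uminus add.assoc minus_add del: add_uminus_conv_diff)
  also have "\<dots> = - (Pw x0 x0 i' + g' + Pw x0 l' x0) + (Pw x0 x0 i' + g' + Pw x0 l' y1)"
    using Q[of x0 y1] Q00 by simp
  also have "\<dots> = - Pw x0 l' x0 + Pw x0 l' y1"
    by (simp add: diff_conv_add_uminus add.assoc minus_add del: add_uminus_conv_diff)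
  finally have "last (fg_rep (- Pw x0 l x0 + Pw x0 l y1)) = last (fg_rep (- Pw x0 l' x0 + Pw x0 l' y1))"
    by simp
  then have ll: "l = l'" by (simp add: last_right)
  have gg: "g = g'" using Q00 ii ll by (simp add: add.assoc)
  show ?thesis using m m' ii ll gg by simp
qed

end


lemma Phi_leval:
  "(\<forall>i\<in>lvars t. i < length p) \<Longrightarrow>
   Phi x0 (leval fcss_mul fcss_inv p t) = leval (mmul x0) (minv x0) (map (Phi x0) p) (map_ltrm (Phi x0) t)"
  by (induction t) (auto simp: Phi_mul Phi_inv)

definition cv :: "'x \<Rightarrow> 'x fcss" where "cv x = abs_fcss (Var x)"

definition Dt :: "'x \<Rightarrow> 'x \<Rightarrow> 'x \<Rightarrow> 'x fcss ltrm \<Rightarrow> 'x fcss ltrm" where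
  "Dt x0 y z v = LMul (LMul (LMul (LMul (LConst (cv x0)) (LConst (cv y))) v) (LConst (cv z))) (LConst (cv x0))"

definition At :: "'x \<Rightarrow> 'x \<Rightarrow> 'x \<Rightarrow> nat \<Rightarrow> nat \<Rightarrow> 'x fcss ltrm" where
  "At x0 y z i j = LMul (Dt x0 y z (LVar i)) (LInv (Dt x0 y z (LVar j)))"

definition Cj :: "'x fcss \<Rightarrow> 'x fcss ltrm \<Rightarrow> 'x fcss ltrm" where
  "Cj c t = LMul (LConst c) (LMul t (LInv (LConst c)))"

definition EqW :: "'x \<Rightarrow> 'x \<Rightarrow> 'x \<Rightarrow> 'x \<Rightarrow> 'x \<Rightarrow> 'x fcss \<Rightarrow> 'x fcss ltrm \<times> 'x fcss ltrm" where
  "EqW x0 y z y' z' c = (LMul (At x0 y z 0 1) (Cj c (At x0 y' z' 2 3)),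
                         LMul (Cj c (At x0 y' z' 2 3)) (At x0 y z 0 1))"

definition WW :: "'x \<Rightarrow> ('x fcss ltrm \<times> 'x fcss ltrm) set" where
  "WW x0 = {EqW x0 y z y' z' c | y z y' z' c. \<exists>h. Phi x0 c = (x0, h, x0)}"

lemma lvars_EqW: "lvars (fst (EqW x0 y z y' z' c)) \<union> lvars (snd (EqW x0 y z y' z' c)) \<subseteq> {..<4}"
  by (auto simp: EqW_def Cj_def At_def Dt_def)

lemma model_Dt: "leval (mmul x0) (minv x0) q (map_ltrm (Phi x0) (Dt x0 y z (LVar i))) = (x0, hdv x0 y z (q ! i), x0)"
  by (cases "q ! i") (simp add: Dt_def cv_def Phi_var hdv_def gl_def add.assoc)

lemma model_At: "leval (mmul x0) (minv x0) q (map_ltrm (Phi x0) (At x0 y z i j)) =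
   (x0, hdv x0 y z (q ! i) - hdv x0 y z (q ! j), x0)"
  by (simp add: At_def model_Dt)

lemma model_Eq:
  assumes c: "Phi x0 c = (x0, h, x0)"
  shows "leval (mmul x0) (minv x0) q (map_ltrm (Phi x0) (fst (EqW x0 y z y' z' c))) =
           (x0, (hdv x0 y z (q ! 0) - hdv x0 y z (q ! 1)) + (h + ((hdv x0 y' z' (q ! 2) - hdv x0 y' z' (q ! 3)) - h)), x0)"
    and "leval (mmul x0) (minv x0) q (map_ltrm (Phi x0) (snd (EqW x0 y z y' z' c))) =
           (x0, (h + ((hdv x0 y' z' (q ! 2) - hdv x0 y' z' (q ! 3)) - h)) + (hdv x0 y z (q ! 0) - hdv x0 y z (q ! 1)), x0)"
  using c by (simp_all add: EqW_def Cj_def model_At add.assoc)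


lemma Phi_eq_iff: "a = b \<longleftrightarrow> Phi x0 a = Phi x0 b"
  using Phi_inj by metis

lemma EqW_iff:
  assumes p: "length p = 4" and c: "Phi x0 c = (x0, h, x0)"
  shows "leval fcss_mul fcss_inv p (fst (EqW x0 y z y' z' c)) = leval fcss_mul fcss_inv p (snd (EqW x0 y z y' z' c))
    \<longleftrightarrow> (hdv x0 y z (Phi x0 (p ! 0)) - hdv x0 y z (Phi x0 (p ! 1))) + (h + ((hdv x0 y' z' (Phi x0 (p ! 2)) - hdv x0 y' z' (Phi x0 (p ! 3))) - h))
       = (h + ((hdv x0 y' z' (Phi x0 (p ! 2)) - hdv x0 y' z' (Phi x0 (p ! 3))) - h)) + (hdv x0 y z (Phi x0 (p ! 0)) - hdv x0 y z (Phi x0 (p ! 1)))"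
proof -
  have v1: "\<forall>i\<in>lvars (fst (EqW x0 y z y' z' c)). i < length p" and v2: "\<forall>i\<in>lvars (snd (EqW x0 y z y' z' c)). i < length p"
    using lvars_EqW[of x0 y z y' z' c] p by auto
  show ?thesis
    apply (subst Phi_eq_iff[of _ _ x0])
    apply (simp only: Phi_leval[OF v1] Phi_leval[OF v2] model_Eq[OF c])
    using p by simp
qed

lemma WW_sol:
  assumes y1: "y1 \<noteq> x0" and p: "length p = 4"
  shows "(\<forall>(l, r)\<in>WW x0. leval fcss_mul fcss_inv p l = leval fcss_mul fcss_inv p r) \<longleftrightarrow> (p ! 0 = p ! 1 \<or> p ! 2 = p ! 3)"
proof
  assume h: "p ! 0 = p ! 1 \<or> p ! 2 = p ! 3"
  show "\<forall>(l, r)\<in>WW x0. leval fcss_mul fcss_inv p l = leval fcss_mul fcss_inv p r"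
  proof clarify
    fix l r assume "(l, r) \<in> WW x0"
    then obtain y z y' z' c h where e: "(l, r) = EqW x0 y z y' z' c" and c: "Phi x0 c = (x0, h, x0)"
      unfolding WW_def by blast
    have "leval fcss_mul fcss_inv p (fst (EqW x0 y z y' z' c)) = leval fcss_mul fcss_inv p (snd (EqW x0 y z y' z' c))"
      unfolding EqW_iff[OF p c] using h by auto
    then show "leval fcss_mul fcss_inv p l = leval fcss_mul fcss_inv p r" using e
      by (metis fst_conv snd_conv)
  qed
next
  assume all: "\<forall>(l, r)\<in>WW x0. leval fcss_mul fcss_inv p l = leval fcss_mul fcss_inv p r"
  show "p ! 0 = p ! 1 \<or> p ! 2 = p ! 3"
  proof (rule ccontr)
    assume nn: "\<not> (p ! 0 = p ! 1 \<or> p ! 2 = p ! 3)"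
    then have n1: "Phi x0 (p ! 0) \<noteq> Phi x0 (p ! 1)" using Phi_inj by metis
    have n2: "Phi x0 (p ! 2) \<noteq> Phi x0 (p ! 3)" using nn Phi_inj by metis
    obtain y z where yz: "hdv x0 y z (Phi x0 (p ! 0)) \<noteq> hdv x0 y z (Phi x0 (p ! 1))"
      using sep_hdv[OF y1] n1 by blast
    obtain y' z' where yz': "hdv x0 y' z' (Phi x0 (p ! 2)) \<noteq> hdv x0 y' z' (Phi x0 (p ! 3))"
      using sep_hdv[OF y1] n2 by blast
    let ?a = "hdv x0 y z (Phi x0 (p ! 0)) - hdv x0 y z (Phi x0 (p ! 1))"
    let ?b = "hdv x0 y' z' (Phi x0 (p ! 2)) - hdv x0 y' z' (Phi x0 (p ! 3))"
    have a0: "?a \<noteq> 0" using yz by simp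
    have b0: "?b \<noteq> 0" using yz' by simp
    obtain h where hH: "h \<in> Hset x0" and hne: "?a + (h + (?b - h)) \<noteq> h + (?b - h) + ?a"
      using noncomm[OF y1 a0 b0] by blast
    obtain c where c: "Phi x0 c = (x0, h, x0)" using hH unfolding Hset_def by blast
    have "EqW x0 y z y' z' c \<in> WW x0" unfolding WW_def using c by blast
    then have "leval fcss_mul fcss_inv p (fst (EqW x0 y z y' z' c)) = leval fcss_mul fcss_inv p (snd (EqW x0 y z y' z' c))"
      using all by (auto simp: case_prod_beta)
    then show False using hne unfolding EqW_iff[OF p c] by simp
  qed
qed

fun lsubst :: "(nat \<Rightarrow> 'c ltrm) \<Rightarrow> 'c ltrm \<Rightarrow> 'c ltrm" where
  "lsubst \<sigma> (LVar i) = \<sigma> i"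
| "lsubst \<sigma> (LConst c) = LConst c"
| "lsubst \<sigma> (LMul s t) = LMul (lsubst \<sigma> s) (lsubst \<sigma> t)"
| "lsubst \<sigma> (LInv s) = LInv (lsubst \<sigma> s)"

lemma leval_lsubst:
  "(\<forall>i\<in>lvars t. q ! i = leval mul iv p (\<sigma> i)) \<Longrightarrow> leval mul iv p (lsubst \<sigma> t) = leval mul iv q t"
  by (induction t) auto

lemma lvars_lsubst: "lvars (lsubst \<sigma> t) = (\<Union>i\<in>lvars t. lvars (\<sigma> i))"
  by (induction t) auto

lemma nth4: "i < 4 \<Longrightarrow> i = 0 \<or> i = 1 \<or> i = 2 \<or> i = (3::nat)" by auto

lemma ED_crit:
  fixes mul :: "'a \<Rightarrow> 'a \<Rightarrow> 'a" and iv :: "'a \<Rightarrow> 'a" and c1 c2 :: 'a and W :: "('a ltrm \<times> 'a ltrm) set"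
  assumes c12: "c1 \<noteq> c2"
    and Wv: "\<forall>(l, r)\<in>W. lvars l \<union> lvars r \<subseteq> {..<4}"
    and Wsol: "\<And>q. length q = 4 \<Longrightarrow>
       (\<forall>(l, r)\<in>W. leval mul iv q l = leval mul iv q r) \<longleftrightarrow> (q ! 0 = q ! 1 \<or> q ! 2 = q ! 3)"
  shows "equational_domain mul iv"
proof -
  have emp: "algebraic_set mul iv m {}" for m
    unfolding algebraic_set_def solution_set_def
    by (rule exI[of _ "{(LConst c1, LConst c2)}"]) (use c12 in auto)
  have un: "algebraic_set mul iv m (Y1 \<union> Y2)"
    if a1: "algebraic_set mul iv m Y1" and a2: "algebraic_set mul iv m Y2" for m Y1 Y2
  proof -
    obtain E1 where E1v: "\<forall>(s, t)\<in>E1. lvars s \<union> lvars t \<subseteq> {..<m}" and Y1: "Y1 = solution_set mul iv m E1"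
      using a1 unfolding algebraic_set_def by blast
    obtain E2 where E2v: "\<forall>(s, t)\<in>E2. lvars s \<union> lvars t \<subseteq> {..<m}" and Y2: "Y2 = solution_set mul iv m E2"
      using a2 unfolding algebraic_set_def by blast
    define \<sigma> :: "'a ltrm \<Rightarrow> 'a ltrm \<Rightarrow> 'a ltrm \<Rightarrow> 'a ltrm \<Rightarrow> nat \<Rightarrow> 'a ltrm"
      where "\<sigma> s t u v = (\<lambda>i. [s, t, u, v] ! i)" for s t u v
    define E where "E = {(lsubst (\<sigma> s t u v) l, lsubst (\<sigma> s t u v) r) | l r s t u v.
                          (l, r) \<in> W \<and> (s, t) \<in> E1 \<and> (u, v) \<in> E2}"
    have sv: "lvars (\<sigma> s t u v i) \<subseteq> {..<m}" if "(s, t) \<in> E1" "(u, v) \<in> E2" "i < 4" for s t u v i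
    proof -
      have "lvars s \<union> lvars t \<subseteq> {..<m}" using E1v that(1) by blast
      moreover have "lvars u \<union> lvars v \<subseteq> {..<m}" using E2v that(2) by blast
      ultimately show ?thesis using nth4[OF that(3)] unfolding \<sigma>_def by (elim disjE) auto
    qed
    have vars: "\<forall>(a, b)\<in>E. lvars a \<union> lvars b \<subseteq> {..<m}"
    proof -
      have *: "lvars (lsubst (\<sigma> s t u v) l) \<union> lvars (lsubst (\<sigma> s t u v) r) \<subseteq> {..<m}"
        if lr: "(l, r) \<in> W" and st: "(s, t) \<in> E1" and uv: "(u, v) \<in> E2" for l r s t u v
      proof -
        have "lvars l \<subseteq> {..<4}" "lvars r \<subseteq> {..<4}" using Wv lr by auto
        then show ?thesis unfolding lvars_lsubst using sv[OF st uv] by blast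
      qed
      show ?thesis unfolding E_def using * by blast
    qed
    have W4: "(\<forall>x\<in>W. leval mul iv [a, b, c, d] (fst x) = leval mul iv [a, b, c, d] (snd x)) \<longleftrightarrow> (a = b \<or> c = d)"
      for a b c d
      using Wsol[of "[a, b, c, d]"] by (simp add: case_prod_beta)
    have key: "solution_set mul iv m E = Y1 \<union> Y2"
    proof (rule set_eqI)
      fix p
      let ?ev = "leval mul iv p"
      have sub: "?ev (lsubst (\<sigma> s t u v) l) = leval mul iv [?ev s, ?ev t, ?ev u, ?ev v] l"
        if lv: "lvars l \<subseteq> {..<4}" for s t u v l
      proof (rule leval_lsubst, intro ballI)
        fix i assume "i \<in> lvars l"
        then have "i < 4" using lv by auto
        then have "i = 0 \<or> i = 1 \<or> i = 2 \<or> i = 3" by (rule nth4)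
        then show "[?ev s, ?ev t, ?ev u, ?ev v] ! i = ?ev (\<sigma> s t u v i)"
          unfolding \<sigma>_def by (elim disjE) simp_all
      qed
      have eqv: "(\<forall>x\<in>E. ?ev (fst x) = ?ev (snd x)) \<longleftrightarrow>
          (\<forall>x\<in>E1. \<forall>y\<in>E2. ?ev (fst x) = ?ev (snd x) \<or> ?ev (fst y) = ?ev (snd y))"
      proof
        assume H: "\<forall>x\<in>E. ?ev (fst x) = ?ev (snd x)"
        show "\<forall>x\<in>E1. \<forall>y\<in>E2. ?ev (fst x) = ?ev (snd x) \<or> ?ev (fst y) = ?ev (snd y)"
        proof (intro ballI)
          fix x y assume x: "x \<in> E1" and y: "y \<in> E2"
          obtain s t where xst: "x = (s, t)" by (cases x)
          obtain u v where yuv: "y = (u, v)" by (cases y)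
          have "\<forall>z\<in>W. leval mul iv [?ev s, ?ev t, ?ev u, ?ev v] (fst z) = leval mul iv [?ev s, ?ev t, ?ev u, ?ev v] (snd z)"
          proof
            fix z assume z: "z \<in> W"
            obtain l r where zlr: "z = (l, r)" by (cases z)
            have mem: "(lsubst (\<sigma> s t u v) l, lsubst (\<sigma> s t u v) r) \<in> E"
              unfolding E_def using z zlr x y xst yuv by blast
            have lv: "lvars l \<subseteq> {..<4}" "lvars r \<subseteq> {..<4}" using Wv z zlr by auto
            show "leval mul iv [?ev s, ?ev t, ?ev u, ?ev v] (fst z) = leval mul iv [?ev s, ?ev t, ?ev u, ?ev v] (snd z)"
              using H mem sub[OF lv(1)] sub[OF lv(2)] zlr by fastforce
          qed
          then show "?ev (fst x) = ?ev (snd x) \<or> ?ev (fst y) = ?ev (snd y)"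
            unfolding W4 xst yuv by simp
        qed
      next
        assume H: "\<forall>x\<in>E1. \<forall>y\<in>E2. ?ev (fst x) = ?ev (snd x) \<or> ?ev (fst y) = ?ev (snd y)"
        show "\<forall>x\<in>E. ?ev (fst x) = ?ev (snd x)"
        proof
          fix w assume "w \<in> E"
          then obtain l r s t u v where w: "w = (lsubst (\<sigma> s t u v) l, lsubst (\<sigma> s t u v) r)"
            and lr: "(l, r) \<in> W" and st: "(s, t) \<in> E1" and uv: "(u, v) \<in> E2"
            unfolding E_def by blast
          have lv: "lvars l \<subseteq> {..<4}" "lvars r \<subseteq> {..<4}" using Wv lr by auto
          have "?ev s = ?ev t \<or> ?ev u = ?ev v" using H st uv by fastforce
          then have "\<forall>z\<in>W. leval mul iv [?ev s, ?ev t, ?ev u, ?ev v] (fst z) = leval mul iv [?ev s, ?ev t, ?ev u, ?ev v] (snd z)"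
            unfolding W4 .
          then have "leval mul iv [?ev s, ?ev t, ?ev u, ?ev v] l = leval mul iv [?ev s, ?ev t, ?ev u, ?ev v] r"
            using lr by fastforce
          then show "?ev (fst w) = ?ev (snd w)" using w sub[OF lv(1)] sub[OF lv(2)] by simp
        qed
      qed
      have fo: "(\<forall>x\<in>A. \<forall>y\<in>B. P x \<or> Q y) \<longleftrightarrow> (\<forall>x\<in>A. P x) \<or> (\<forall>y\<in>B. Q y)" for A B P Q
        by blast
      have sE: "p \<in> solution_set mul iv m G \<longleftrightarrow> length p = m \<and> (\<forall>x\<in>G. ?ev (fst x) = ?ev (snd x))" for G
        by (simp add: solution_set_def case_prod_beta)
      have fo': "(\<forall>x\<in>E1. \<forall>y\<in>E2. ?ev (fst x) = ?ev (snd x) \<or> ?ev (fst y) = ?ev (snd y)) \<longleftrightarrow>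
          (\<forall>x\<in>E1. ?ev (fst x) = ?ev (snd x)) \<or> (\<forall>y\<in>E2. ?ev (fst y) = ?ev (snd y))"
        by (rule fo)
      show "p \<in> solution_set mul iv m E \<longleftrightarrow> p \<in> Y1 \<union> Y2"
        unfolding Y1 Y2 Un_iff sE eqv fo' by blast
    qed
    show ?thesis unfolding algebraic_set_def using vars key by blast
  qed
  show ?thesis
    unfolding equational_domain_def
  proof (intro allI impI)
    fix m and F :: "'a list set set"
    assume "finite F \<and> (\<forall>Y\<in>F. algebraic_set mul iv m Y)"
    then have fF: "finite F" and aF: "\<forall>Y\<in>F. algebraic_set mul iv m Y" by auto
    show "algebraic_set mul iv m (\<Union> F)"
      using fF aF by (induction F rule: finite_induct) (auto simp: emp un)
  qed
qed


theorem mainTheorem8: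
  assumes "card (UNIV :: ('x::finite) set) \<ge> 2"
  shows "equational_domain (fcss_mul :: 'x fcss \<Rightarrow> 'x fcss \<Rightarrow> 'x fcss) fcss_inv"
proof -
  have "\<not> (\<forall>a\<in>(UNIV :: 'x set). \<forall>b\<in>UNIV. a = b)"
    using assms card_le_Suc0_iff_eq[of "UNIV :: 'x set"] by auto
  then obtain x0 y1 :: 'x where y1: "y1 \<noteq> x0" by blast
  have c12: "cv x0 \<noteq> cv y1"
    using Phi_var[of x0 x0] Phi_var[of x0 y1] y1 unfolding cv_def by auto
  have Wv: "\<forall>(l, r)\<in>WW x0. lvars l \<union> lvars r \<subseteq> {..<4}"
  proof
    fix w assume "w \<in> WW x0"
    then obtain y z y' z' c where w: "w = EqW x0 y z y' z' c" unfolding WW_def by blast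
    show "case w of (l, r) \<Rightarrow> lvars l \<union> lvars r \<subseteq> {..<4}"
      using lvars_EqW[of x0 y z y' z' c] w by (simp add: case_prod_beta)
  qed
  show ?thesis
    by (rule ED_crit[OF c12 Wv WW_sol[OF y1]])
qed


end
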